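(* Let $A$ be a T-brace whose additive group is torsion-free. If $A$ is $\star$-hypercentral, then $A$ is abelian (i.e. $a\star b=0$, equivalently $ab=a+b$, for all $a,b\in A$).
   Context: A (left) brace is a set $A$ with two operations $+$ and $\cdot$ such that $(A,+)$ is an abelian group, $(A,\cdot)$ is a group, and $a(b+c)=ab+ac-a$ for all $a,b,c\in A$. Put $a\star b=ab-a-b$. A subbrace is a subset which is a subgroup of both $(A,+)$ and $(A,\cdot)$; a subbrace $L$ is an ideal if $a\star z, z\star a\in L$ for all $a\in A$, $z\in L$, and then the quotient brace $A/L$ is defined. $A$ is a T-brace if whenever $I$ is an ideal of $J$ and $J$ is an ideal of $A$, then $I$ is an ideal of $A$. The $\star$-center is $\zeta(\star,A)=\{a\in A: a\star x=x\star a=0 \ \forall x\in A\}$. The upper $\star$-central series: $\zeta_0(\star,A)=0$, $\zeta_{\alpha+1}(\star,A)/\zeta_\alpha(\star,A)=\zeta(\star,A/\zeta_\alpha(\star,A))$, unions at limit ordinals; its last term is $\zeta_\infty(\star,A)$. $A$ is $\star$-hypercentral if $A=\zeta_\infty(\star,A)$. *)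

theory Defs
  imports "HOL-Algebra.Group"
begin

text \<open>A (left) brace is given by two HOL-Algebra structures on the same carrier:
  G is the additive group (its "mult" is the brace addition +),
  M is the multiplicative group (its "mult" is the brace product).\<close>

definition brace :: "'a monoid \<Rightarrow> 'a monoid \<Rightarrow> bool" where
  "brace G M \<longleftrightarrow> comm_group G \<and> group M \<and> carrier M = carrier G \<and>
     (\<forall>a\<in>carrier G. \<forall>b\<in>carrier G. \<forall>c\<in>carrier G.
        a \<otimes>\<^bsub>M\<^esub> (b \<otimes>\<^bsub>G\<^esub> c)
          = ((a \<otimes>\<^bsub>M\<^esub> b) \<otimes>\<^bsub>G\<^esub> (a \<otimes>\<^bsub>M\<^esub> c)) \<otimes>\<^bsub>G\<^esub> inv\<^bsub>G\<^esub> a)"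

definition star :: "'a monoid \<Rightarrow> 'a monoid \<Rightarrow> 'a \<Rightarrow> 'a \<Rightarrow> 'a" where
  "star G M a b = ((a \<otimes>\<^bsub>M\<^esub> b) \<otimes>\<^bsub>G\<^esub> inv\<^bsub>G\<^esub> a) \<otimes>\<^bsub>G\<^esub> inv\<^bsub>G\<^esub> b"

definition subbrace :: "'a monoid \<Rightarrow> 'a monoid \<Rightarrow> 'a set \<Rightarrow> bool" where
  "subbrace G M L \<longleftrightarrow> subgroup L G \<and> subgroup L M"

text \<open>I is an ideal of the subbrace J (with the operations restricted to J;
  subgroups and \<star> of J are computed with the same operations).\<close>
definition ideal_of :: "'a monoid \<Rightarrow> 'a monoid \<Rightarrow> 'a set \<Rightarrow> 'a set \<Rightarrow> bool" where
  "ideal_of G M J I \<longleftrightarrow> subbrace G M I \<and> I \<subseteq> J \<and>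
     (\<forall>a\<in>J. \<forall>z\<in>I. star G M a z \<in> I \<and> star G M z a \<in> I)"

definition brace_ideal :: "'a monoid \<Rightarrow> 'a monoid \<Rightarrow> 'a set \<Rightarrow> bool" where
  "brace_ideal G M L \<longleftrightarrow> ideal_of G M (carrier G) L"

definition T_brace :: "'a monoid \<Rightarrow> 'a monoid \<Rightarrow> bool" where
  "T_brace G M \<longleftrightarrow> brace G M \<and>
     (\<forall>I J. ideal_of G M J I \<and> brace_ideal G M J \<longrightarrow> brace_ideal G M I)"

definition torsion_free_add :: "'a monoid \<Rightarrow> bool" where
  "torsion_free_add G \<longleftrightarrow>
     (\<forall>a\<in>carrier G. \<forall>n::nat. n > 0 \<and> a [^]\<^bsub>G\<^esub> n = \<one>\<^bsub>G\<^esub> \<longrightarrow> a = \<one>\<^bsub>G\<^esub>)"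

text \<open>The last term \<zeta>_\<infinity> of the upper \<star>-central series. Since
  a + \<zeta>_\<alpha> lies in \<zeta>(\<star>, A/\<zeta>_\<alpha>) iff a\<star>x and x\<star>a lie in \<zeta>_\<alpha> for all x,
  the transfinite series (starting at 0, unions at limits) is the increasing
  iteration of this operator, and its final term is the least set containing 0
  and closed under it.\<close>
inductive_set zeta_inf :: "'a monoid \<Rightarrow> 'a monoid \<Rightarrow> 'a set" for G M where
  zero: "\<one>\<^bsub>G\<^esub> \<in> zeta_inf G M"
| step: "a \<in> carrier G \<Longrightarrow>
          \<forall>x\<in>carrier G. star G M a x \<in> zeta_inf G M \<and> star G M x a \<in> zeta_inf G M
          \<Longrightarrow> a \<in> zeta_inf G M"

definition star_hypercentral :: "'a monoid \<Rightarrow> 'a monoid \<Rightarrow> bool" where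
  "star_hypercentral G M \<longleftrightarrow> zeta_inf G M = carrier G"

end

theory Submission
  imports Defs "HOL-Algebra.Generated_Groups"
begin

locale bctx =
  fixes G M :: "'a monoid"
  assumes br: "brace G M"
begin

sublocale G: comm_group G using br unfolding brace_def by auto
sublocale M: group M using br unfolding brace_def by auto

abbreviation add (infixl "\<oplus>" 65) where "x \<oplus> y \<equiv> x \<otimes>\<^bsub>G\<^esub> y"
abbreviation neg ("\<ominus> _" [81] 80) where "\<ominus> x \<equiv> inv\<^bsub>G\<^esub> x"
abbreviation mul (infixl "\<odot>" 70) where "x \<odot> y \<equiv> x \<otimes>\<^bsub>M\<^esub> y"
abbreviation st (infixl "\<star>" 75) where "x \<star> y \<equiv> star G M x y"
abbreviation zr ("\<zero>") where "\<zero> \<equiv> \<one>\<^bsub>G\<^esub>"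

lemma carrM[simp]: "carrier M = carrier G" using br unfolding brace_def by auto

lemma dist: "a \<in> carrier G \<Longrightarrow> b \<in> carrier G \<Longrightarrow> c \<in> carrier G \<Longrightarrow>
   a \<odot> (b \<oplus> c) = (a \<odot> b \<oplus> a \<odot> c) \<oplus> \<ominus> a"
  using br unfolding brace_def by auto

lemma mclosed[simp]: "a \<in> carrier G \<Longrightarrow> b \<in> carrier G \<Longrightarrow> a \<odot> b \<in> carrier G"
  using M.m_closed by simp

lemma canc[simp]: "x \<in> carrier G \<Longrightarrow> y \<in> carrier G \<Longrightarrow> x \<oplus> (\<ominus> x \<oplus> y) = y"
  "x \<in> carrier G \<Longrightarrow> y \<in> carrier G \<Longrightarrow> \<ominus> x \<oplus> (x \<oplus> y) = y"
  by (simp_all add: G.m_assoc[symmetric])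

lemma cancx1[simp]: "x \<in> carrier G \<Longrightarrow> y1 \<in> carrier G \<Longrightarrow> z \<in> carrier G \<Longrightarrow> (x \<oplus> (y1 \<oplus> (\<ominus> x \<oplus> z))) = (y1 \<oplus> z)"
  by (simp add: G.m_lcomm[of "x"])

lemma cancx2[simp]: "x \<in> carrier G \<Longrightarrow> y1 \<in> carrier G \<Longrightarrow> (x \<oplus> (y1 \<oplus> \<ominus> x)) = y1"
  by (simp add: G.m_lcomm[of "x"])

lemma cancx3[simp]: "x \<in> carrier G \<Longrightarrow> y1 \<in> carrier G \<Longrightarrow> y2 \<in> carrier G \<Longrightarrow> z \<in> carrier G \<Longrightarrow> (x \<oplus> (y1 \<oplus> (y2 \<oplus> (\<ominus> x \<oplus> z)))) = (y1 \<oplus> (y2 \<oplus> z))"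
  by (simp add: G.m_lcomm[of "x"])

lemma cancx4[simp]: "x \<in> carrier G \<Longrightarrow> y1 \<in> carrier G \<Longrightarrow> y2 \<in> carrier G \<Longrightarrow> (x \<oplus> (y1 \<oplus> (y2 \<oplus> \<ominus> x))) = (y1 \<oplus> y2)"
  by (simp add: G.m_lcomm[of "x"])

lemma cancx5[simp]: "x \<in> carrier G \<Longrightarrow> y1 \<in> carrier G \<Longrightarrow> y2 \<in> carrier G \<Longrightarrow> y3 \<in> carrier G \<Longrightarrow> z \<in> carrier G \<Longrightarrow> (x \<oplus> (y1 \<oplus> (y2 \<oplus> (y3 \<oplus> (\<ominus> x \<oplus> z))))) = (y1 \<oplus> (y2 \<oplus> (y3 \<oplus> z)))"
  by (simp add: G.m_lcomm[of "x"])

lemma cancx6[simp]: "x \<in> carrier G \<Longrightarrow> y1 \<in> carrier G \<Longrightarrow> y2 \<in> carrier G \<Longrightarrow> y3 \<in> carrier G \<Longrightarrow> (x \<oplus> (y1 \<oplus> (y2 \<oplus> (y3 \<oplus> \<ominus> x)))) = (y1 \<oplus> (y2 \<oplus> y3))"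
  by (simp add: G.m_lcomm[of "x"])

lemma cancx7[simp]: "x \<in> carrier G \<Longrightarrow> y1 \<in> carrier G \<Longrightarrow> y2 \<in> carrier G \<Longrightarrow> y3 \<in> carrier G \<Longrightarrow> y4 \<in> carrier G \<Longrightarrow> z \<in> carrier G \<Longrightarrow> (x \<oplus> (y1 \<oplus> (y2 \<oplus> (y3 \<oplus> (y4 \<oplus> (\<ominus> x \<oplus> z)))))) = (y1 \<oplus> (y2 \<oplus> (y3 \<oplus> (y4 \<oplus> z))))"
  by (simp add: G.m_lcomm[of "x"])

lemma cancx8[simp]: "x \<in> carrier G \<Longrightarrow> y1 \<in> carrier G \<Longrightarrow> y2 \<in> carrier G \<Longrightarrow> y3 \<in> carrier G \<Longrightarrow> y4 \<in> carrier G \<Longrightarrow> (x \<oplus> (y1 \<oplus> (y2 \<oplus> (y3 \<oplus> (y4 \<oplus> \<ominus> x))))) = (y1 \<oplus> (y2 \<oplus> (y3 \<oplus> y4)))"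
  by (simp add: G.m_lcomm[of "x"])

lemma cancx9[simp]: "x \<in> carrier G \<Longrightarrow> y1 \<in> carrier G \<Longrightarrow> z \<in> carrier G \<Longrightarrow> (\<ominus> x \<oplus> (y1 \<oplus> (x \<oplus> z))) = (y1 \<oplus> z)"
  by (simp add: G.m_lcomm[of "\<ominus> x"])

lemma cancx10[simp]: "x \<in> carrier G \<Longrightarrow> y1 \<in> carrier G \<Longrightarrow> (\<ominus> x \<oplus> (y1 \<oplus> x)) = y1"
  by (simp add: G.m_lcomm[of "\<ominus> x"])

lemma cancx11[simp]: "x \<in> carrier G \<Longrightarrow> y1 \<in> carrier G \<Longrightarrow> y2 \<in> carrier G \<Longrightarrow> z \<in> carrier G \<Longrightarrow> (\<ominus> x \<oplus> (y1 \<oplus> (y2 \<oplus> (x \<oplus> z)))) = (y1 \<oplus> (y2 \<oplus> z))"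
  by (simp add: G.m_lcomm[of "\<ominus> x"])

lemma cancx12[simp]: "x \<in> carrier G \<Longrightarrow> y1 \<in> carrier G \<Longrightarrow> y2 \<in> carrier G \<Longrightarrow> (\<ominus> x \<oplus> (y1 \<oplus> (y2 \<oplus> x))) = (y1 \<oplus> y2)"
  by (simp add: G.m_lcomm[of "\<ominus> x"])

lemma cancx13[simp]: "x \<in> carrier G \<Longrightarrow> y1 \<in> carrier G \<Longrightarrow> y2 \<in> carrier G \<Longrightarrow> y3 \<in> carrier G \<Longrightarrow> z \<in> carrier G \<Longrightarrow> (\<ominus> x \<oplus> (y1 \<oplus> (y2 \<oplus> (y3 \<oplus> (x \<oplus> z))))) = (y1 \<oplus> (y2 \<oplus> (y3 \<oplus> z)))"
  by (simp add: G.m_lcomm[of "\<ominus> x"])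

lemma cancx14[simp]: "x \<in> carrier G \<Longrightarrow> y1 \<in> carrier G \<Longrightarrow> y2 \<in> carrier G \<Longrightarrow> y3 \<in> carrier G \<Longrightarrow> (\<ominus> x \<oplus> (y1 \<oplus> (y2 \<oplus> (y3 \<oplus> x)))) = (y1 \<oplus> (y2 \<oplus> y3))"
  by (simp add: G.m_lcomm[of "\<ominus> x"])

lemma cancx15[simp]: "x \<in> carrier G \<Longrightarrow> y1 \<in> carrier G \<Longrightarrow> y2 \<in> carrier G \<Longrightarrow> y3 \<in> carrier G \<Longrightarrow> y4 \<in> carrier G \<Longrightarrow> z \<in> carrier G \<Longrightarrow> (\<ominus> x \<oplus> (y1 \<oplus> (y2 \<oplus> (y3 \<oplus> (y4 \<oplus> (x \<oplus> z)))))) = (y1 \<oplus> (y2 \<oplus> (y3 \<oplus> (y4 \<oplus> z))))"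
  by (simp add: G.m_lcomm[of "\<ominus> x"])

lemma cancx16[simp]: "x \<in> carrier G \<Longrightarrow> y1 \<in> carrier G \<Longrightarrow> y2 \<in> carrier G \<Longrightarrow> y3 \<in> carrier G \<Longrightarrow> y4 \<in> carrier G \<Longrightarrow> (\<ominus> x \<oplus> (y1 \<oplus> (y2 \<oplus> (y3 \<oplus> (y4 \<oplus> x))))) = (y1 \<oplus> (y2 \<oplus> (y3 \<oplus> y4)))"
  by (simp add: G.m_lcomm[of "\<ominus> x"])

lemma r_zero: "a \<in> carrier G \<Longrightarrow> a \<odot> \<zero> = a"
proof -
  assume a: "a \<in> carrier G"
  have "a \<odot> \<zero> = a \<odot> (\<zero> \<oplus> \<zero>)" by simp
  also have "\<dots> = (a \<odot> \<zero> \<oplus> a \<odot> \<zero>) \<oplus> \<ominus> a" by (rule dist) (simp_all add: a)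
  finally have "a \<odot> \<zero> \<oplus> \<ominus>(a \<odot> \<zero>) = (a \<odot> \<zero> \<oplus> a \<odot> \<zero>) \<oplus> \<ominus> a \<oplus> \<ominus>(a \<odot> \<zero>)" by simp
  hence "\<zero> = \<ominus> a \<oplus> a \<odot> \<zero>" using a by (simp add: G.m_ac)
  thus ?thesis using a G.inv_solve_left[of "\<zero>" a "a \<odot> \<zero>"] by simp
qed

lemma one_eq[simp]: "\<one>\<^bsub>M\<^esub> = \<zero>"
  using r_zero[of "\<one>\<^bsub>M\<^esub>"] M.one_closed by simp

lemma star_closed[simp]: "a \<in> carrier G \<Longrightarrow> b \<in> carrier G \<Longrightarrow> a \<star> b \<in> carrier G"
  by (simp add: star_def)

lemma prod_eq: "a \<in> carrier G \<Longrightarrow> b \<in> carrier G \<Longrightarrow> a \<odot> b = a \<star> b \<oplus> a \<oplus> b"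
  by (simp add: star_def G.m_ac)


lemma star_add2: "x \<in> carrier G \<Longrightarrow> b \<in> carrier G \<Longrightarrow> c \<in> carrier G \<Longrightarrow>
   x \<star> (b \<oplus> c) = x \<star> b \<oplus> x \<star> c"
  by (simp add: star_def dist G.m_ac G.inv_mult)

lemma star_zero2[simp]: "x \<in> carrier G \<Longrightarrow> x \<star> \<zero> = \<zero>"
  by (simp add: star_def r_zero)

lemma star_zero1[simp]: "x \<in> carrier G \<Longrightarrow> \<zero> \<star> x = \<zero>"
proof -
  assume x: "x \<in> carrier G"
  have e: "\<zero> \<odot> x = x" using M.l_one[of x] x by simp
  have "\<zero> \<star> x = x \<oplus> \<ominus> \<zero> \<oplus> \<ominus> x" unfolding star_def by (simp only: e)
  thus ?thesis using x by simp
qed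

lemma star_neg2: "x \<in> carrier G \<Longrightarrow> b \<in> carrier G \<Longrightarrow> x \<star> (\<ominus> b) = \<ominus> (x \<star> b)"
proof -
  assume a: "x \<in> carrier G" "b \<in> carrier G"
  have "x \<star> (\<ominus> b) \<oplus> x \<star> b = \<zero>" using star_add2[of x "\<ominus> b" b] a by simp
  thus ?thesis using a by (metis G.inv_equality G.inv_closed star_closed)
qed

lemma star_hom2: "x \<in> carrier G \<Longrightarrow> (\<lambda>b. x \<star> b) \<in> hom G G"
  by (auto simp: hom_def star_add2)

lemma star_pow2: "x \<in> carrier G \<Longrightarrow> b \<in> carrier G \<Longrightarrow> x \<star> (b [^]\<^bsub>G\<^esub> (n::int)) = (x \<star> b) [^]\<^bsub>G\<^esub> n"
  using hom_int_pow[OF star_hom2[of x] _ G.is_group G.is_group, of b n] by simp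

definition Zc where "Zc = {z \<in> carrier G. \<forall>x\<in>carrier G. z \<star> x = \<zero> \<and> x \<star> z = \<zero>}"

lemma Zc_carr: "z \<in> Zc \<Longrightarrow> z \<in> carrier G" by (simp add: Zc_def)

lemma zc_l: "z \<in> Zc \<Longrightarrow> x \<in> carrier G \<Longrightarrow> z \<odot> x = z \<oplus> x"
  using prod_eq[of z x] by (simp add: Zc_def)

lemma zc_r: "z \<in> Zc \<Longrightarrow> x \<in> carrier G \<Longrightarrow> x \<odot> z = x \<oplus> z"
  using prod_eq[of x z] by (simp add: Zc_def)

lemma B3: "z \<in> Zc \<Longrightarrow> x \<in> carrier G \<Longrightarrow> y \<in> carrier G \<Longrightarrow> x \<odot> (y \<oplus> z) = x \<odot> y \<oplus> z"
  using Zc_carr[of z] by (simp add: dist zc_r G.m_ac)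

lemma B3': "z \<in> Zc \<Longrightarrow> x \<in> carrier G \<Longrightarrow> y \<in> carrier G \<Longrightarrow> (y \<oplus> z) \<odot> x = y \<odot> x \<oplus> z"
proof -
  assume a: "z \<in> Zc" "x \<in> carrier G" "y \<in> carrier G"
  note zc = Zc_carr[OF a(1)]
  have "(y \<oplus> z) \<odot> x = (y \<odot> z) \<odot> x" using a zc_r by simp
  also have "\<dots> = y \<odot> (z \<odot> x)" using a zc by (simp add: M.m_assoc)
  also have "\<dots> = y \<odot> (x \<oplus> z)" using a zc zc_l by (simp add: G.m_comm)
  also have "\<dots> = y \<odot> x \<oplus> z" using a B3 by simp
  finally show ?thesis .
qed

lemma B4: "z \<in> Zc \<Longrightarrow> x \<in> carrier G \<Longrightarrow> y \<in> carrier G \<Longrightarrow> (x \<oplus> z) \<star> y = x \<star> y"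
  using Zc_carr[of z] by (simp add: star_def B3' G.m_ac G.inv_mult)

lemma Zc_sub: "subgroup Zc G"
proof (rule G.subgroupI)
  show "Zc \<subseteq> carrier G" by (auto simp: Zc_def)
  have "\<zero> \<in> Zc" by (simp add: Zc_def)
  thus "Zc \<noteq> {}" by blast
next
  fix z assume z: "z \<in> Zc"
  note zc = Zc_carr[OF z]
  { fix x assume x: "x \<in> carrier G"
    have e1: "(\<ominus> z \<oplus> z) \<star> x = (\<ominus> z) \<star> x" by (rule B4[OF z]) (simp_all add: x zc)
    have e2: "(\<ominus> z \<oplus> z) \<star> x = \<zero>" using x zc by simp
    from e1 e2 have "(\<ominus> z) \<star> x = \<zero>" by metis
    moreover have "x \<star> (\<ominus> z) = \<zero>" using star_neg2[of x z] x z by (simp add: Zc_def)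
    ultimately have "(\<ominus> z) \<star> x = \<zero> \<and> x \<star> (\<ominus> z) = \<zero>" by simp }
  thus "\<ominus> z \<in> Zc" using zc by (simp add: Zc_def)
next
  fix z w assume z: "z \<in> Zc" and w: "w \<in> Zc"
  note zc = Zc_carr[OF z] Zc_carr[OF w]
  { fix x assume x: "x \<in> carrier G"
    have "(z \<oplus> w) \<star> x = \<zero>" using B4[OF w, of z x] x zc z by (simp add: Zc_def)
    moreover have "x \<star> (z \<oplus> w) = \<zero>" using star_add2[of x z w] x z w zc by (simp add: Zc_def)
    ultimately have "(z \<oplus> w) \<star> x = \<zero> \<and> x \<star> (z \<oplus> w) = \<zero>" by simp }
  thus "z \<oplus> w \<in> Zc" using zc by (simp add: Zc_def)
qed

lemma Zc_pow: "z \<in> Zc \<Longrightarrow> z [^]\<^bsub>G\<^esub> (n::int) \<in> Zc"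
  using G.subgroup_int_pow_closed[OF Zc_sub] by simp

lemma Zc_add: "z \<in> Zc \<Longrightarrow> w \<in> Zc \<Longrightarrow> z \<oplus> w \<in> Zc"
  using subgroup.m_closed[OF Zc_sub] by simp

lemma Zc_neg: "z \<in> Zc \<Longrightarrow> \<ominus> z \<in> Zc"
  using subgroup.m_inv_closed[OF Zc_sub] by simp

lemma Zc_zero: "\<zero> \<in> Zc"
  using subgroup.one_closed[OF Zc_sub] by simp

lemma starmul: "b \<in> carrier G \<Longrightarrow> c \<in> carrier G \<Longrightarrow> y \<in> carrier G \<Longrightarrow>
  (b \<odot> c) \<star> y = b \<star> (c \<star> y) \<oplus> c \<star> y \<oplus> b \<star> y"
proof -
  assume a: "b \<in> carrier G" "c \<in> carrier G" "y \<in> carrier G"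
  have "(b \<odot> c) \<odot> y = b \<odot> (c \<odot> y)" using a by (simp add: M.m_assoc)
  also have "c \<odot> y = c \<star> y \<oplus> (c \<oplus> y)" using a prod_eq by (simp add: G.m_assoc)
  also have "b \<odot> (c \<star> y \<oplus> (c \<oplus> y)) = (b \<odot> (c \<star> y) \<oplus> b \<odot> (c \<oplus> y)) \<oplus> \<ominus> b"
    using a by (simp add: dist)
  also have "b \<odot> (c \<oplus> y) = (b \<odot> c \<oplus> b \<odot> y) \<oplus> \<ominus> b" using a by (simp add: dist)
  finally have e: "(b \<odot> c) \<odot> y = (b \<odot> (c \<star> y) \<oplus> ((b \<odot> c \<oplus> b \<odot> y) \<oplus> \<ominus> b)) \<oplus> \<ominus> b" .
  have "(b \<odot> c) \<star> y = ((b \<odot> c) \<odot> y \<oplus> \<ominus> (b \<odot> c)) \<oplus> \<ominus> y" by (simp add: star_def)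
  also have "\<dots> = b \<odot> (c \<star> y) \<oplus> \<ominus> b \<oplus> b \<odot> y \<oplus> \<ominus> b \<oplus> \<ominus> y"
    unfolding e using a by (simp add: G.m_ac)
  also have "\<dots> = b \<star> (c \<star> y) \<oplus> c \<star> y \<oplus> b \<star> y"
    using a by (simp add: star_def G.m_ac)
  finally show ?thesis .
qed


definition La where "La = {b \<in> carrier G. \<forall>y\<in>carrier G. b \<star> y \<in> Zc}"

lemma La_carr: "b \<in> La \<Longrightarrow> b \<in> carrier G" by (simp add: La_def)
lemma La_Zc: "b \<in> La \<Longrightarrow> y \<in> carrier G \<Longrightarrow> b \<star> y \<in> Zc" by (simp add: La_def)

lemma La_add_star: "b \<in> La \<Longrightarrow> c \<in> La \<Longrightarrow> y \<in> carrier G \<Longrightarrow> (b \<oplus> c) \<star> y = b \<star> y \<oplus> c \<star> y"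
proof -
  assume b: "b \<in> La" and c: "c \<in> La" and y: "y \<in> carrier G"
  note bc = La_carr[OF b] La_carr[OF c]
  have zz: "\<ominus> (b \<star> c) \<in> Zc" using Zc_neg La_Zc[OF b] bc by simp
  have "b \<oplus> c = (b \<odot> c) \<oplus> \<ominus> (b \<star> c)" using prod_eq[of b c] bc by (simp add: G.m_ac)
  hence "(b \<oplus> c) \<star> y = (b \<odot> c) \<star> y" using B4[OF zz, of "b \<odot> c" y] bc y by simp
  also have "\<dots> = b \<star> (c \<star> y) \<oplus> c \<star> y \<oplus> b \<star> y" using starmul bc y by simp
  also have "b \<star> (c \<star> y) = \<zero>" using La_Zc[OF c y] bc by (simp add: Zc_def)
  finally show ?thesis using bc y by (simp add: G.m_ac)
qed

lemma La_add: "b \<in> La \<Longrightarrow> c \<in> La \<Longrightarrow> b \<oplus> c \<in> La"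
proof -
  assume b: "b \<in> La" and c: "c \<in> La"
  { fix y assume y: "y \<in> carrier G"
    have "(b \<oplus> c) \<star> y \<in> Zc" unfolding La_add_star[OF b c y] using Zc_add La_Zc b c y by blast }
  thus ?thesis using La_carr b c unfolding La_def by blast
qed

lemma La_neg_star: "b \<in> La \<Longrightarrow> y \<in> carrier G \<Longrightarrow> (\<ominus> b) \<star> y = \<ominus> (b \<star> y)"
proof -
  assume b: "b \<in> La" and y: "y \<in> carrier G"
  note bc = La_carr[OF b]
  define bi where "bi = inv\<^bsub>M\<^esub> b"
  have bic: "bi \<in> carrier G" using bc M.inv_closed[of b] by (simp add: bi_def)
  have "bi \<odot> b = \<zero>" using M.l_inv[of b] bc by (simp add: bi_def)
  hence "\<zero> = bi \<star> (b \<star> y) \<oplus> b \<star> y \<oplus> bi \<star> y" using starmul[of bi b y] bic bc y by simp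
  also have "bi \<star> (b \<star> y) = \<zero>" using La_Zc[OF b y] bic by (simp add: Zc_def)
  finally have e: "\<zero> = b \<star> y \<oplus> bi \<star> y" using bic bc y by simp
  hence biy: "bi \<star> y = \<ominus> (b \<star> y)" using bic bc y G.inv_equality[of "bi \<star> y" "b \<star> y"] G.m_comm[of "b \<star> y" "bi \<star> y"] by simp
  have "b \<star> bi = \<ominus> b \<oplus> \<ominus> bi" using M.r_inv[of b] bc bic by (simp add: star_def bi_def)
  hence nb: "\<ominus> b = bi \<oplus> b \<star> bi" using bc bic by simp
  have zz: "b \<star> bi \<in> Zc" using La_Zc[OF b bic] .
  have "(\<ominus> b) \<star> y = (bi \<oplus> b \<star> bi) \<star> y" using nb by simp
  also have "\<dots> = bi \<star> y" using B4[OF zz bic y] .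
  finally show ?thesis using biy by simp
qed

lemma La_neg: "b \<in> La \<Longrightarrow> \<ominus> b \<in> La"
proof -
  assume b: "b \<in> La"
  { fix y assume y: "y \<in> carrier G"
    have "(\<ominus> b) \<star> y \<in> Zc" unfolding La_neg_star[OF b y] using Zc_neg La_Zc b y by blast }
  thus ?thesis using La_carr b unfolding La_def by blast
qed

lemma La_sub: "subgroup La G"
proof (rule G.subgroupI)
  show "La \<subseteq> carrier G" by (auto simp: La_def)
  have "\<zero> \<in> La" by (simp add: La_def Zc_zero)
  thus "La \<noteq> {}" by blast
qed (auto simp: La_add La_neg)

lemma La_pow: "b \<in> La \<Longrightarrow> b [^]\<^bsub>G\<^esub> (n::int) \<in> La"
  using G.subgroup_int_pow_closed[OF La_sub] by simp

lemma La_pow_star: "b \<in> La \<Longrightarrow> y \<in> carrier G \<Longrightarrow> (b [^]\<^bsub>G\<^esub> (n::int)) \<star> y = (b \<star> y) [^]\<^bsub>G\<^esub> n"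
proof -
  assume b: "b \<in> La" and y: "y \<in> carrier G"
  let ?H = "G\<lparr>carrier := La\<rparr>"
  have gH: "group ?H" using G.subgroup_imp_group[OF La_sub] .
  have hom: "(\<lambda>b. b \<star> y) \<in> hom ?H G"
    by (auto simp: hom_def La_add_star y La_carr)
  have "(b [^]\<^bsub>?H\<^esub> n) \<star> y = (b \<star> y) [^]\<^bsub>G\<^esub> n"
    using hom_int_pow[OF hom _ gH G.is_group, of b n] b by simp
  thus ?thesis using G.int_pow_consistent[OF La_sub b, of n] by simp
qed


context
  fixes a assumes aL: "a \<in> La" and aR: "\<forall>y\<in>carrier G. y \<star> a \<in> Zc"
begin

abbreviation p where "p n \<equiv> a [^]\<^bsub>G\<^esub> (n::int)"
abbreviation cc where "cc \<equiv> a \<star> a"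

lemma ac[simp]: "a \<in> carrier G" using La_carr[OF aL] .
lemma cZ: "cc \<in> Zc" using La_Zc[OF aL] by simp
lemma cpZ: "cc [^]\<^bsub>G\<^esub> (m::int) \<in> Zc" using Zc_pow[OF cZ] .
lemma cpc[simp]: "cc [^]\<^bsub>G\<^esub> (m::int) \<in> carrier G" by simp

lemma p_star: "y \<in> carrier G \<Longrightarrow> (p n) \<star> y = (a \<star> y) [^]\<^bsub>G\<^esub> n"
  using La_pow_star[OF aL] by simp
lemma star_p: "y \<in> carrier G \<Longrightarrow> y \<star> (p n) = (y \<star> a) [^]\<^bsub>G\<^esub> n"
  using star_pow2 by simp
lemma pp: "(p n) \<star> (p m) = cc [^]\<^bsub>G\<^esub> (n * m)"
  using p_star[of "p m" n] star_p[of a m] G.int_pow_pow[of cc m n] by (simp add: mult.commute)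

lemma stJ1: "u \<in> Zc \<Longrightarrow> y \<in> carrier G \<Longrightarrow> y \<star> (p n \<oplus> u) = (y \<star> a) [^]\<^bsub>G\<^esub> n"
  using star_add2[of y "p n" u] star_p[of y n] Zc_carr[of u] by (simp add: Zc_def)
lemma stJ2: "u \<in> Zc \<Longrightarrow> y \<in> carrier G \<Longrightarrow> (p n \<oplus> u) \<star> y = (a \<star> y) [^]\<^bsub>G\<^esub> n"
  using B4[of u "p n" y] p_star[of y n] by simp

lemma prodJ: "u \<in> Zc \<Longrightarrow> u' \<in> Zc \<Longrightarrow>
  (p n \<oplus> u) \<odot> (p m \<oplus> u') = p (n + m) \<oplus> (cc [^]\<^bsub>G\<^esub> (n * m) \<oplus> u \<oplus> u')"
proof -
  assume u: "u \<in> Zc" and u': "u' \<in> Zc"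
  note uc = Zc_carr[OF u] Zc_carr[OF u']
  have "(p n \<oplus> u) \<odot> (p m \<oplus> u') = (p n \<odot> (p m \<oplus> u')) \<oplus> u" using B3'[OF u] uc by simp
  also have "p n \<odot> (p m \<oplus> u') = p n \<odot> p m \<oplus> u'" using B3[OF u'] uc by simp
  also have "p n \<odot> p m = cc [^]\<^bsub>G\<^esub> (n * m) \<oplus> p n \<oplus> p m" using prod_eq[of "p n" "p m"] pp by simp
  also have "p (n + m) = p n \<oplus> p m" using G.int_pow_mult by simp
  ultimately show ?thesis using uc by (simp add: G.m_ac)
qed

definition JJ where "JJ = {p n \<oplus> u | n u. u \<in> Zc}"
definition II where "II = {p n \<oplus> cc [^]\<^bsub>G\<^esub> (m::int) | n m. True}"

lemma II_JJ: "II \<subseteq> JJ" unfolding II_def JJ_def using cpZ by blast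

lemma JJ_carr: "JJ \<subseteq> carrier G" unfolding JJ_def using Zc_carr by auto

lemma JJ_subG: "subgroup JJ G"
proof (rule G.subgroupI)
  show "JJ \<subseteq> carrier G" by (rule JJ_carr)
  have "p 0 \<oplus> \<zero> \<in> JJ" unfolding JJ_def using Zc_zero by blast
  thus "JJ \<noteq> {}" by blast
next
  fix x assume "x \<in> JJ"
  then obtain n u where x: "x = p n \<oplus> u" and u: "u \<in> Zc" unfolding JJ_def by blast
  have "\<ominus> x = p (- n) \<oplus> \<ominus> u" using x Zc_carr[OF u] by (simp add: G.inv_mult G.int_pow_neg)
  thus "\<ominus> x \<in> JJ" unfolding JJ_def using Zc_neg[OF u] by blast
next
  fix x y assume "x \<in> JJ" "y \<in> JJ"
  then obtain n u m v where x: "x = p n \<oplus> u" and u: "u \<in> Zc" and y: "y = p m \<oplus> v" and v: "v \<in> Zc"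
    unfolding JJ_def by blast
  have "x \<oplus> y = p (n + m) \<oplus> (u \<oplus> v)" using x y Zc_carr[OF u] Zc_carr[OF v] by (simp add: G.int_pow_mult G.m_ac)
  thus "x \<oplus> y \<in> JJ" unfolding JJ_def using Zc_add[OF u v] by blast
qed

lemma II_subG: "subgroup II G"
proof (rule G.subgroupI)
  show "II \<subseteq> carrier G" using II_JJ JJ_carr by blast
  have "p 0 \<oplus> cc [^]\<^bsub>G\<^esub> (0::int) \<in> II" unfolding II_def by blast
  thus "II \<noteq> {}" by blast
next
  fix x assume "x \<in> II"
  then obtain n and m::int where x: "x = p n \<oplus> cc [^]\<^bsub>G\<^esub> m" unfolding II_def by blast
  have "\<ominus> x = p (- n) \<oplus> cc [^]\<^bsub>G\<^esub> (- m)" using x by (simp add: G.inv_mult G.int_pow_neg)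
  thus "\<ominus> x \<in> II" unfolding II_def by blast
next
  fix x y assume "x \<in> II" "y \<in> II"
  then obtain n m and u v :: int where x: "x = p n \<oplus> cc [^]\<^bsub>G\<^esub> u" and y: "y = p m \<oplus> cc [^]\<^bsub>G\<^esub> v"
    unfolding II_def by blast
  have "x \<oplus> y = p (n + m) \<oplus> cc [^]\<^bsub>G\<^esub> (u + v)" using x y by (simp add: G.int_pow_mult G.m_ac)
  thus "x \<oplus> y \<in> II" unfolding II_def by blast
qed

lemma JJ_subM: "subgroup JJ M"
proof (rule M.subgroupI)
  show "JJ \<subseteq> carrier M" using JJ_carr by simp
  have "p 0 \<oplus> \<zero> \<in> JJ" unfolding JJ_def using Zc_zero by blast
  thus "JJ \<noteq> {}" by blast
next
  fix x assume "x \<in> JJ"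
  then obtain n u where x: "x = p n \<oplus> u" and u: "u \<in> Zc" unfolding JJ_def by blast
  note uc = Zc_carr[OF u]
  have w: "cc [^]\<^bsub>G\<^esub> (n * n) \<oplus> \<ominus> u \<in> Zc" using Zc_add[OF cpZ Zc_neg[OF u]] .
  have "(p (- n) \<oplus> (cc [^]\<^bsub>G\<^esub> (n * n) \<oplus> \<ominus> u)) \<odot> x
        = p (- n + n) \<oplus> (cc [^]\<^bsub>G\<^esub> (- n * n) \<oplus> (cc [^]\<^bsub>G\<^esub> (n * n) \<oplus> \<ominus> u) \<oplus> u)"
    unfolding x by (rule prodJ[OF w u])
  also have "\<dots> = \<zero>" using uc by (simp add: G.int_pow_neg G.m_ac)
  finally have "inv\<^bsub>M\<^esub> x = p (- n) \<oplus> (cc [^]\<^bsub>G\<^esub> (n * n) \<oplus> \<ominus> u)"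
    using x uc Zc_carr[OF w] by (intro M.inv_equality) simp_all
  thus "inv\<^bsub>M\<^esub> x \<in> JJ" unfolding JJ_def using w by blast
next
  fix x y assume "x \<in> JJ" "y \<in> JJ"
  then obtain n u m v where x: "x = p n \<oplus> u" and u: "u \<in> Zc" and y: "y = p m \<oplus> v" and v: "v \<in> Zc"
    unfolding JJ_def by blast
  have "x \<odot> y = p (n + m) \<oplus> (cc [^]\<^bsub>G\<^esub> (n * m) \<oplus> u \<oplus> v)" using x y prodJ[OF u v] by simp
  thus "x \<odot> y \<in> JJ" unfolding JJ_def using Zc_add[OF Zc_add[OF cpZ u] v] by blast
qed

lemma cpow3: "cc [^]\<^bsub>G\<^esub> (i::int) \<oplus> cc [^]\<^bsub>G\<^esub> (j::int) \<oplus> cc [^]\<^bsub>G\<^esub> (k::int) = cc [^]\<^bsub>G\<^esub> (i + j + k)"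
  by (simp add: G.int_pow_mult)

lemma II_subM: "subgroup II M"
proof (rule M.subgroupI)
  show "II \<subseteq> carrier M" using II_JJ JJ_carr by simp
  have "p 0 \<oplus> cc [^]\<^bsub>G\<^esub> (0::int) \<in> II" unfolding II_def by blast
  thus "II \<noteq> {}" by blast
next
  fix x assume "x \<in> II"
  then obtain n and m::int where x: "x = p n \<oplus> cc [^]\<^bsub>G\<^esub> m" unfolding II_def by blast
  have "(p (- n) \<oplus> cc [^]\<^bsub>G\<^esub> (n * n - m)) \<odot> x
        = p (- n + n) \<oplus> (cc [^]\<^bsub>G\<^esub> (- n * n) \<oplus> cc [^]\<^bsub>G\<^esub> (n * n - m) \<oplus> cc [^]\<^bsub>G\<^esub> m)"
    unfolding x by (rule prodJ[OF cpZ cpZ])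
  also have "\<dots> = p (- n + n) \<oplus> cc [^]\<^bsub>G\<^esub> (- n * n + (n * n - m) + m)" by (simp only: cpow3)
  also have "\<dots> = \<zero>" by simp
  finally have "inv\<^bsub>M\<^esub> x = p (- n) \<oplus> cc [^]\<^bsub>G\<^esub> (n * n - m)"
    using x by (intro M.inv_equality) simp_all
  thus "inv\<^bsub>M\<^esub> x \<in> II" unfolding II_def by blast
next
  fix x y assume "x \<in> II" "y \<in> II"
  then obtain n m and u v :: int where x: "x = p n \<oplus> cc [^]\<^bsub>G\<^esub> u" and y: "y = p m \<oplus> cc [^]\<^bsub>G\<^esub> v"
    unfolding II_def by blast
  have "x \<odot> y = p (n + m) \<oplus> (cc [^]\<^bsub>G\<^esub> (n * m) \<oplus> cc [^]\<^bsub>G\<^esub> u \<oplus> cc [^]\<^bsub>G\<^esub> v)"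
    using x y prodJ[OF cpZ cpZ] by simp
  also have "\<dots> = p (n + m) \<oplus> cc [^]\<^bsub>G\<^esub> (n * m + u + v)" by (simp only: cpow3)
  finally show "x \<odot> y \<in> II" unfolding II_def by blast
qed

lemma JJ_ideal: "brace_ideal G M JJ"
  unfolding brace_ideal_def ideal_of_def subbrace_def
proof (intro conjI ballI)
  show "subgroup JJ G" "subgroup JJ M" "JJ \<subseteq> carrier G" by (rule JJ_subG JJ_subM JJ_carr)+
next
  fix y x assume y: "y \<in> carrier G" and "x \<in> JJ"
  then obtain n u where x: "x = p n \<oplus> u" and u: "u \<in> Zc" unfolding JJ_def by blast
  have z1: "(y \<star> a) [^]\<^bsub>G\<^esub> n \<in> Zc" using Zc_pow aR y by simp
  have z2: "(a \<star> y) [^]\<^bsub>G\<^esub> n \<in> Zc" using Zc_pow La_Zc[OF aL y] by simp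
  have "p 0 \<oplus> (y \<star> a) [^]\<^bsub>G\<^esub> n \<in> JJ" "p 0 \<oplus> (a \<star> y) [^]\<^bsub>G\<^esub> n \<in> JJ"
    unfolding JJ_def using z1 z2 by blast+
  thus "y \<star> x \<in> JJ" "x \<star> y \<in> JJ" using x stJ1[OF u y] stJ2[OF u y] Zc_carr[OF z1] Zc_carr[OF z2] by simp_all
qed

lemma II_ideal: "ideal_of G M JJ II"
  unfolding ideal_of_def subbrace_def
proof (intro conjI ballI)
  show "subgroup II G" "subgroup II M" "II \<subseteq> JJ" by (rule II_subG II_subM II_JJ)+
next
  fix y x assume "y \<in> JJ" and "x \<in> II"
  then obtain k u where y: "y = p k \<oplus> u" and u: "u \<in> Zc" unfolding JJ_def by blast
  from \<open>x \<in> II\<close> obtain n and m::int where x: "x = p n \<oplus> cc [^]\<^bsub>G\<^esub> m" unfolding II_def by blast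
  have yc: "y \<in> carrier G" using y Zc_carr[OF u] by simp
  have "y \<star> x = (y \<star> a) [^]\<^bsub>G\<^esub> n" using x stJ1[OF cpZ yc] by simp
  also have "y \<star> a = cc [^]\<^bsub>G\<^esub> k" using y stJ2[OF u, of a] by simp
  also have "(cc [^]\<^bsub>G\<^esub> k) [^]\<^bsub>G\<^esub> n = p 0 \<oplus> cc [^]\<^bsub>G\<^esub> (k * n)" by (simp add: G.int_pow_pow)
  finally show "y \<star> x \<in> II" unfolding II_def by blast
  have "x \<star> y = (a \<star> y) [^]\<^bsub>G\<^esub> n" using x stJ2[OF cpZ yc] by simp
  also have "a \<star> y = cc [^]\<^bsub>G\<^esub> k" using y stJ1[OF u, of a] by simp
  also have "(cc [^]\<^bsub>G\<^esub> k) [^]\<^bsub>G\<^esub> n = p 0 \<oplus> cc [^]\<^bsub>G\<^esub> (k * n)" by (simp add: G.int_pow_pow)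
  finally show "x \<star> y \<in> II" unfolding II_def by blast
qed

lemma KEY: assumes T: "T_brace G M" and y: "y \<in> carrier G"
  shows "\<exists>n m. y \<star> a = p n \<oplus> cc [^]\<^bsub>G\<^esub> (m::int)" and "\<exists>n m. a \<star> y = p n \<oplus> cc [^]\<^bsub>G\<^esub> (m::int)"
proof -
  have bi: "brace_ideal G M II" using T II_ideal JJ_ideal unfolding T_brace_def by blast
  have aI: "a \<in> II" unfolding II_def by (rule CollectI, rule exI[of _ 1], rule exI[of _ 0]) simp
  have "y \<star> a \<in> II" "a \<star> y \<in> II" using bi aI y unfolding brace_ideal_def ideal_of_def by auto
  thus "\<exists>n m. y \<star> a = p n \<oplus> cc [^]\<^bsub>G\<^esub> (m::int)" "\<exists>n m. a \<star> y = p n \<oplus> cc [^]\<^bsub>G\<^esub> (m::int)"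
    unfolding II_def by auto
qed

end

lemma tf_int: assumes tf: "torsion_free_add G" and x: "x \<in> carrier G" and k: "k \<noteq> 0"
  and e: "x [^]\<^bsub>G\<^esub> (k::int) = \<zero>" shows "x = \<zero>"
proof (cases "k > 0")
  case True
  have "x [^]\<^bsub>G\<^esub> (nat k) = x [^]\<^bsub>G\<^esub> k" using True by (intro pow_nat) simp
  hence "x [^]\<^bsub>G\<^esub> (nat k) = \<zero>" using e by simp
  moreover have "nat k > 0" using True by simp
  ultimately show ?thesis using tf x unfolding torsion_free_add_def by blast
next
  case False
  hence k0: "k < 0" using k by simp
  have "x [^]\<^bsub>G\<^esub> k = inv\<^bsub>G\<^esub> (x [^]\<^bsub>G\<^esub> (nat (- k)))"
    using k0 int_pow_def2[of G x k] by presburger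
  hence "inv\<^bsub>G\<^esub> (x [^]\<^bsub>G\<^esub> (nat (- k))) = \<zero>" using e by simp
  hence "x [^]\<^bsub>G\<^esub> (nat (- k)) = \<zero>" using G.inv_eq_1_iff[of "x [^]\<^bsub>G\<^esub> (nat (- k))"] x G.nat_pow_closed by blast
  moreover have "nat (- k) > 0" using k0 by simp
  ultimately show ?thesis using tf x unfolding torsion_free_add_def by blast
qed

lemma kill: assumes tf: "torsion_free_add G" and aL: "a \<in> La" and aR: "\<forall>y\<in>carrier G. y \<star> a \<in> Zc"
  and k: "k \<noteq> 0" and pk: "a [^]\<^bsub>G\<^esub> (k::int) \<in> Zc" shows "a \<in> Zc"
proof -
  have ac: "a \<in> carrier G" using La_carr[OF aL] .
  { fix y assume y: "y \<in> carrier G"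
    have "(y \<star> a) [^]\<^bsub>G\<^esub> k = \<zero>" using star_pow2[OF y ac, of k] pk y by (simp add: Zc_def)
    hence "y \<star> a = \<zero>" using tf_int[OF tf _ k] y ac by simp
    have "(a \<star> y) [^]\<^bsub>G\<^esub> k = \<zero>" using La_pow_star[OF aL y, of k] pk y by (simp add: Zc_def)
    hence "a \<star> y = \<zero>" using tf_int[OF tf _ k] y ac by simp
    note this \<open>y \<star> a = \<zero>\<close> }
  thus ?thesis using ac by (simp add: Zc_def)
qed

lemma main: assumes T: "T_brace G M" and tf: "torsion_free_add G"
  and aL: "a \<in> La" and aR: "\<forall>y\<in>carrier G. y \<star> a \<in> Zc" shows "a \<in> Zc"
proof (cases "\<exists>k. k \<noteq> 0 \<and> a [^]\<^bsub>G\<^esub> (k::int) \<in> Zc")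
  case True
  then show ?thesis using kill[OF tf aL aR] by blast
next
  case False
  have ac: "a \<in> carrier G" using La_carr[OF aL] .
  define c where "c = a \<star> a"
  have cZ: "c \<in> Zc" using La_Zc[OF aL ac] by (simp add: c_def)
  have cc: "c \<in> carrier G" using Zc_carr[OF cZ] .
  define b where "b = a [^]\<^bsub>G\<^esub> (2::int)"
  have bL: "b \<in> La" using La_pow[OF aL] by (simp add: b_def)
  have bc: "b \<in> carrier G" using La_carr[OF bL] .
  have bR: "\<forall>y\<in>carrier G. y \<star> b \<in> Zc" using star_pow2 aR ac Zc_pow by (simp add: b_def)
  obtain n m where e: "a \<star> b = b [^]\<^bsub>G\<^esub> (n::int) \<oplus> (b \<star> b) [^]\<^bsub>G\<^esub> (m::int)"
    using KEY(1)[OF bL bR T ac] by blast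
  have ab: "a \<star> b = c [^]\<^bsub>G\<^esub> (2::int)" using star_pow2[OF ac ac] by (simp add: b_def c_def)
  have bb: "b \<star> b = c [^]\<^bsub>G\<^esub> (4::int)"
    using star_pow2[OF bc ac, of 2] La_pow_star[OF aL ac, of 2] G.int_pow_pow[OF cc, of 2 2]
    by (simp add: b_def c_def)
  have bn: "b [^]\<^bsub>G\<^esub> n = a [^]\<^bsub>G\<^esub> (2 * n)" using G.int_pow_pow[OF ac] by (simp add: b_def)
  have e2: "c [^]\<^bsub>G\<^esub> (2::int) = a [^]\<^bsub>G\<^esub> (2 * n) \<oplus> c [^]\<^bsub>G\<^esub> (4 * m)"
    using e ab bb bn G.int_pow_pow[OF cc, of 4 m] by simp
  hence e3: "a [^]\<^bsub>G\<^esub> (2 * n) = c [^]\<^bsub>G\<^esub> (2 - 4 * m)"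
    using G.int_pow_diff[OF cc, of 2 "4 * m"] G.inv_solve_right[of "a [^]\<^bsub>G\<^esub> (2 * n)" "c [^]\<^bsub>G\<^esub> (2::int)" "c [^]\<^bsub>G\<^esub> (4 * m)"] ac cc
    by simp
  have "a [^]\<^bsub>G\<^esub> (2 * n) \<in> Zc" unfolding e3 using Zc_pow[OF cZ] .
  hence "n = 0" using False by (metis mult_eq_0_iff zero_neq_numeral)
  hence "c [^]\<^bsub>G\<^esub> (2 - 4 * m) = \<zero>" using e3 by simp
  moreover have "(2 - 4 * m) \<noteq> 0" by presburger
  ultimately have c0: "c = \<zero>" using tf_int[OF tf cc] by blast
  { fix y assume y: "y \<in> carrier G"
    obtain n1 m1 where e1: "y \<star> a = a [^]\<^bsub>G\<^esub> (n1::int) \<oplus> c [^]\<^bsub>G\<^esub> (m1::int)"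
      using KEY(1)[OF aL aR T y] by (auto simp: c_def)
    hence "y \<star> a = a [^]\<^bsub>G\<^esub> n1" using c0 ac by simp
    moreover have "y \<star> a \<in> Zc" using aR y by blast
    ultimately have "n1 = 0" using False by auto
    hence "y \<star> a = \<zero>" using \<open>y \<star> a = a [^]\<^bsub>G\<^esub> n1\<close> by simp
    obtain n2 m2 where e2: "a \<star> y = a [^]\<^bsub>G\<^esub> (n2::int) \<oplus> c [^]\<^bsub>G\<^esub> (m2::int)"
      using KEY(2)[OF aL aR T y] by (auto simp: c_def)
    hence "a \<star> y = a [^]\<^bsub>G\<^esub> n2" using c0 ac by simp
    moreover have "a \<star> y \<in> Zc" using La_Zc[OF aL y] .
    ultimately have "n2 = 0" using False by auto
    hence "a \<star> y = \<zero>" using \<open>a \<star> y = a [^]\<^bsub>G\<^esub> n2\<close> by simp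
    note this \<open>y \<star> a = \<zero>\<close> }
  thus ?thesis using ac by (simp add: Zc_def)
qed

lemma zeta_Zc: assumes T: "T_brace G M" and tf: "torsion_free_add G"
  shows "x \<in> zeta_inf G M \<Longrightarrow> x \<in> Zc"
proof (induction rule: zeta_inf.induct)
  case zero
  then show ?case using Zc_zero by simp
next
  case (step a)
  have aL: "a \<in> La" unfolding La_def using step by blast
  have aR: "\<forall>y\<in>carrier G. y \<star> a \<in> Zc" using step by blast
  show ?case using main[OF T tf aL aR] .
qed

end

theorem corollary1:
  fixes G M :: "'a monoid"
  assumes "T_brace G M"
    and "torsion_free_add G"
    and "star_hypercentral G M"
  shows "\<forall>a\<in>carrier G. \<forall>b\<in>carrier G. star G M a b = \<one>\<^bsub>G\<^esub>"
proof -
  have br: "brace G M" using assms(1) unfolding T_brace_def by blast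
  interpret bctx G M by (rule bctx.intro[OF br])
  have "\<forall>a\<in>carrier G. a \<in> Zc"
    using zeta_Zc[OF assms(1) assms(2)] assms(3) unfolding star_hypercentral_def by blast
  thus ?thesis unfolding Zc_def by blast
qed

end
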